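(* For estimating $H_M(\underline\theta)$ under squared error loss: (i) $d_{\psi(\alpha)}(X_1,X_2)=\ln Z_1-\psi(\alpha)$ is admissible within $\mathcal M_1$, while $d_{\ln\alpha}(X_1,X_2)=\ln Z_1-\ln\alpha$ and $d_{\ln(\alpha+1)}(X_1,X_2)=\ln Z_1-\ln(\alpha+1)$ are inadmissible and are dominated by $d_{\psi(\alpha)}$. (ii) Let $\beta_1(\alpha)=\psi^{-1}(c_3(\alpha))-\alpha$. (a) The generalized Bayes estimators $d_{\psi(\alpha+\beta)}(X_1,X_2)=\ln Z_1-\psi(\alpha+\beta)$ with $\beta_1(\alpha)\le\beta\le0$ are admissible within $\mathcal M_1$. (b) For $\beta\in(-\alpha,\beta_1(\alpha))\cup(0,\infty)$, $d_{\psi(\alpha+\beta)}$ is inadmissible; for $\beta\in(-\alpha,\beta_1(\alpha))$ it is dominated by $d_{c_3(\alpha)}(X_1,X_2)=\ln Z_1-c_3(\alpha)$, and for $\beta>0$ it is dominated by $d_{\psi(\alpha)}$.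
   Context: Fix a known $\alpha>0$. $X_1,X_2$ are independent, $X_i$ having density $f(x\mid\theta_i)=\frac{x^{\alpha-1}e^{-x/\theta_i}}{\Gamma(\alpha)\theta_i^{\alpha}}$, $x>0$, with unknown $\underline\theta=(\theta_1,\theta_2)\in\Theta=(0,\infty)^2$. $Z_1=\min\{X_1,X_2\}$, $Z_2=\max\{X_1,X_2\}$. $H_M(\underline\theta)=\ln\theta_1\, I(X_1\le X_2)+\ln\theta_2\, I(X_1>X_2)$. $\psi$ is the digamma function (strictly increasing, inverse $\psi^{-1}$); $G_\alpha,g_\alpha$ are the distribution function and density of the gamma distribution with shape $\alpha$, scale $1$; $c_3(\alpha)=2\int_0^\infty\ln(z)[1-G_\alpha(z)]g_\alpha(z)\,dz$. For $c\in\mathbb R$, $d_c(X_1,X_2)=\ln Z_1-c$ and $\mathcal M_1=\{d_c:c\in\mathbb R\}$. Risk: $R(\underline\theta,d)=\mathbb E_{\underline\theta}(d(X_1,X_2)-H_M(\underline\theta))^2$. $d'$ dominates $d$ if its risk is $\le$ for all $\underline\theta$ and $<$ for some; $d$ is inadmissible if some estimator dominates it; $d\in\mathcal M_1$ is admissible within $\mathcal M_1$ if no member of $\mathcal M_1$ dominates it. *)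

theory Defs
  imports "HOL-Analysis.Analysis"
begin

definition gamma_dens :: "real \<Rightarrow> real \<Rightarrow> real \<Rightarrow> real" where
  "gamma_dens a th x =
     (if x > 0 then x powr (a - 1) * exp (- x / th) / (Gamma a * th powr a) else 0)"

definition g_std :: "real \<Rightarrow> real \<Rightarrow> real" where
  "g_std a z = gamma_dens a 1 z"

definition G_std :: "real \<Rightarrow> real \<Rightarrow> real" where
  "G_std a z = (LBINT t:{0..z}. g_std a t)"

definition c3 :: "real \<Rightarrow> real" where
  "c3 a = 2 * (LBINT z:{0<..}. ln z * (1 - G_std a z) * g_std a z)"

definition Digamma_inv :: "real \<Rightarrow> real" where
  "Digamma_inv c = (THE x. x > 0 \<and> Digamma x = c)"

definition beta1 :: "real \<Rightarrow> real" where
  "beta1 a = Digamma_inv (c3 a) - a"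

definition H_M :: "real \<Rightarrow> real \<Rightarrow> real \<Rightarrow> real \<Rightarrow> real" where
  "H_M th1 th2 x1 x2 = (if x1 \<le> x2 then ln th1 else ln th2)"

definition d_est :: "real \<Rightarrow> real \<Rightarrow> real \<Rightarrow> real" where
  "d_est c x1 x2 = ln (min x1 x2) - c"

definition risk :: "real \<Rightarrow> real \<Rightarrow> real \<Rightarrow> (real \<Rightarrow> real \<Rightarrow> real) \<Rightarrow> ennreal" where
  "risk a th1 th2 d =
     (\<integral>\<^sup>+ x. ennreal ((d (fst x) (snd x) - H_M th1 th2 (fst x) (snd x))\<^sup>2
                  * gamma_dens a th1 (fst x) * gamma_dens a th2 (snd x)) \<partial>(lborel \<Otimes>\<^sub>M lborel))"

definition dominates :: "real \<Rightarrow> (real \<Rightarrow> real \<Rightarrow> real) \<Rightarrow> (real \<Rightarrow> real \<Rightarrow> real) \<Rightarrow> bool" where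
  "dominates a d' d \<longleftrightarrow>
     (\<forall>th1>0. \<forall>th2>0. risk a th1 th2 d' \<le> risk a th1 th2 d) \<and>
     (\<exists>th1>0. \<exists>th2>0. risk a th1 th2 d' < risk a th1 th2 d)"

definition inadmissible :: "real \<Rightarrow> (real \<Rightarrow> real \<Rightarrow> real) \<Rightarrow> bool" where
  "inadmissible a d \<longleftrightarrow>
     (\<exists>d'. (\<lambda>x. d' (fst x) (snd x)) \<in> borel_measurable (lborel \<Otimes>\<^sub>M lborel) \<and> dominates a d' d)"

definition admissible_M1 :: "real \<Rightarrow> real \<Rightarrow> bool" where
  "admissible_M1 a c \<longleftrightarrow> \<not> (\<exists>c'. dominates a (d_est c') (d_est c))"

end

theory Submission
  imports Defs "HOL-Probability.Probability_Measure"
begin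

definition ker :: "real \<Rightarrow> real \<Rightarrow> real" where
  "ker s t = (if t > 0 then t powr (s-1) * exp (-t) else 0)"

lemma ker_nonneg: "ker s t \<ge> 0" by (simp add: ker_def)

lemma ker_meas[measurable]: "ker s \<in> borel_measurable borel"
  unfolding ker_def by measurable

lemma ker_alt: "ker s t = indicator {0..} t * t powr (s - 1) / exp t"
  by (auto simp: ker_def indicator_def exp_minus field_simps)

lemma ker_nn: assumes "s > 0" shows "(\<integral>\<^sup>+t. ennreal (ker s t) \<partial>lborel) = ennreal (Gamma s)"
  using Gamma_conv_nn_integral_real[OF assms] by (simp add: ker_alt)

lemma ker_int: assumes "s > 0"
  shows "integrable lborel (ker s)" "integral\<^sup>L lborel (ker s) = Gamma s"
proof -
  have "integrable lborel (ker s) \<and> integral\<^sup>L lborel (ker s) = Gamma s"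
    using ker_nn[OF assms] by (subst nn_integral_eq_integrable[symmetric]) (auto simp: ker_nonneg less_imp_le[OF Gamma_real_pos[OF assms]])
  then show "integrable lborel (ker s)" "integral\<^sup>L lborel (ker s) = Gamma s" by auto
qed

lemma ker_shift: "t powr b * ker s t = ker (s+b) t"
  by (auto simp: ker_def powr_add[symmetric] algebra_simps)

lemma abs_le_1_sq: "\<bar>x::real\<bar> \<le> 1 + x^2"
proof (cases "\<bar>x\<bar> \<le> 1")
  case False
  then have "\<bar>x\<bar> * 1 \<le> \<bar>x\<bar> * \<bar>x\<bar>" by (intro mult_left_mono) auto
  then show ?thesis by (simp add: power2_eq_square)
qed (auto intro: add_increasing2)

lemma ln_sq_bound:
  fixes t e :: real
  assumes t: "t > 0" and e: "e > 0"
  shows "e^2 * (ln t)^2 \<le> t powr (2*e) + t powr (-2*e)"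
proof -
  define u :: real where "u = e * ln t"
  have "\<bar>u\<bar> \<le> exp \<bar>u\<bar>" using exp_ge_add_one_self[of "\<bar>u\<bar>"] by linarith
  then have "\<bar>u\<bar>^2 \<le> (exp \<bar>u\<bar>)^2" by (intro power_mono) auto
  also have "(exp \<bar>u\<bar>)^2 = exp (2*\<bar>u\<bar>)" by (metis exp_add mult_2 power2_eq_square)
  also have "\<dots> \<le> exp (2*u) + exp (-2*u)" by (cases "u \<ge> 0") auto
  finally show ?thesis using t by (simp add: u_def powr_def power_mult_distrib algebra_simps)
qed

lemma ln2_ker_int: assumes s: "s > 0" shows "integrable lborel (\<lambda>t. (ln t)^2 * ker s t)"
proof (rule Bochner_Integration.integrable_bound)
  define e where "e = s/4"
  have e: "e > 0" using s by (simp add: e_def)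
  show "integrable lborel (\<lambda>t. (ker (s + 2*e) t + ker (s - 2*e) t) / e^2)"
    using s by (intro integrable_divide Bochner_Integration.integrable_add ker_int(1)) (auto simp: e_def)
  show "(\<lambda>t. (ln t)^2 * ker s t) \<in> borel_measurable lborel" by measurable
  show "AE t in lborel. norm ((ln t)^2 * ker s t) \<le> norm ((ker (s + 2*e) t + ker (s - 2*e) t) / e^2)"
  proof (intro AE_I2)
    fix t :: real
    show "norm ((ln t)^2 * ker s t) \<le> norm ((ker (s + 2*e) t + ker (s - 2*e) t) / e^2)"
    proof (cases "t > 0")
      case True
      have "e^2 * ((ln t)^2 * ker s t) \<le> (t powr (2*e) + t powr (-2*e)) * ker s t"
        using ln_sq_bound[OF True e] ker_nonneg[of s t] by (simp add: mult_right_mono mult.assoc[symmetric])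
      also have "\<dots> = ker (s + 2*e) t + ker (s - 2*e) t"
        by (simp add: distrib_right ker_shift)
      finally have "(ln t)^2 * ker s t \<le> (ker (s + 2*e) t + ker (s - 2*e) t) / e^2"
        using e by (simp add: field_simps)
      then show ?thesis using ker_nonneg[of s t] ker_nonneg[of "s+2*e" t] ker_nonneg[of "s-2*e" t] by simp
    qed (simp add: ker_def)
  qed
qed

lemma ln_ker_int: assumes s: "s > 0" shows "integrable lborel (\<lambda>t. ln t * ker s t)"
proof (rule Bochner_Integration.integrable_bound)
  show "integrable lborel (\<lambda>t. ker s t + (ln t)^2 * ker s t)"
    using s by (intro Bochner_Integration.integrable_add ker_int(1) ln2_ker_int)
  show "(\<lambda>t. ln t * ker s t) \<in> borel_measurable lborel" by measurable
  show "AE t in lborel. norm (ln t * ker s t) \<le> norm (ker s t + (ln t)^2 * ker s t)"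
  proof (intro AE_I2)
    fix t :: real
    have "\<bar>ln t\<bar> \<le> 1 + (ln t)^2" by (rule abs_le_1_sq)
    then have "\<bar>ln t\<bar> * ker s t \<le> (1 + (ln t)^2) * ker s t" using ker_nonneg[of s t] by (rule mult_right_mono)
    then show "norm (ln t * ker s t) \<le> norm (ker s t + (ln t)^2 * ker s t)"
      using ker_nonneg[of s t] by (simp add: abs_mult algebra_simps)
  qed
qed


lemma hseq_at0: "filterlim (\<lambda>n. inverse (real (Suc n))) (at (0::real)) sequentially"
proof -
  have "filterlim (\<lambda>n. inverse (real (Suc n))) (at_right (0::real)) sequentially"
    by (rule tendsto_imp_filterlim_at_right[OF LIMSEQ_inverse_real_of_nat]) auto
  then show ?thesis by (rule filterlim_mono) (auto simp: at_within_le_at)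
qed

lemma deriv_seq:
  assumes "(f has_real_derivative D) (at x)"
  shows "(\<lambda>n. (f (x + inverse (real (Suc n))) - f x) / inverse (real (Suc n))) \<longlonglongrightarrow> D"
proof -
  have "((\<lambda>h. (f (x + h) - f x) / h) \<longlongrightarrow> D) (at 0)"
    using assms by (simp add: DERIV_def)
  from filterlim_compose[OF this hseq_at0] show ?thesis by (simp add: o_def)
qed

lemma exp_m1_bound: "\<bar>exp (y::real) - 1\<bar> \<le> \<bar>y\<bar> * (1 + exp y)"
proof (cases "y \<ge> 0")
  case True
  have "1 - y \<le> exp (-y)" using exp_ge_add_one_self[of "-y"] by simp
  then have "exp y * (1 - y) \<le> exp y * exp (-y)" by (intro mult_left_mono) auto
  then have "exp y - 1 \<le> y * exp y" by (simp add: exp_minus algebra_simps)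
  then show ?thesis using True by (auto simp: algebra_simps)
next
  case False
  have a: "1 + y \<le> exp y" by (rule exp_ge_add_one_self)
  have b: "exp y \<le> 1" using False by simp
  have c: "y * exp y \<le> 0" using False by (simp add: mult_nonpos_nonneg)
  have "\<bar>exp y - 1\<bar> = 1 - exp y" using b by simp
  moreover have "\<bar>y\<bar> * (1 + exp y) = - y - y * exp y" using False by (simp add: algebra_simps)
  ultimately show ?thesis using a c by linarith
qed

lemma abs_ln_ker_int: assumes "s > 0" shows "integrable lborel (\<lambda>t. \<bar>ln t\<bar> * ker s t)"
proof -
  have "integrable lborel (\<lambda>t. \<bar>ln t * ker s t\<bar>)" using ln_ker_int[OF assms] by (rule integrable_abs)
  then show ?thesis by (simp add: abs_mult ker_nonneg)
qed

lemma not_nonpos_Int_pos: "(s::real) > 0 \<Longrightarrow> s \<notin> \<int>\<^sub>\<le>\<^sub>0"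
  by (auto elim!: nonpos_Ints_cases)

lemma ln_ker_integral: assumes s: "s > 0"
  shows "(\<integral>t. ln t * ker s t \<partial>lborel) = Gamma s * Digamma s"
proof -
  define h where "h n = inverse (real (Suc n))" for n
  have h: "0 < h n" "h n \<le> 1" for n by (auto simp: h_def field_simps)
  define F where "F n t = (ker (s + h n) t - ker s t) / h n" for n t
  have intF: "integral\<^sup>L lborel (F n) = (Gamma (s + h n) - Gamma s) / h n" for n
    unfolding F_def using s h[of n]
    by (simp add: ker_int Bochner_Integration.integral_diff ker_int(1))
  have D: "(Gamma has_real_derivative Gamma s * Digamma s) (at s)"
    using has_field_derivative_Gamma[OF not_nonpos_Int_pos[OF s]] .
  have lim1: "(\<lambda>n. integral\<^sup>L lborel (F n)) \<longlonglongrightarrow> Gamma s * Digamma s"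
    using deriv_seq[OF D] by (simp add: intF h_def)
  define w where "w t = 2 * (\<bar>ln t\<bar> * ker s t) + \<bar>ln t\<bar> * ker (s+1) t" for t
  have i1: "integrable lborel (\<lambda>t. \<bar>ln t\<bar> * ker s t)" by (rule abs_ln_ker_int[OF s])
  have i2: "integrable lborel (\<lambda>t. \<bar>ln t\<bar> * ker (s+1) t)" by (rule abs_ln_ker_int) (use s in simp)
  have lim2: "(\<lambda>n. integral\<^sup>L lborel (F n)) \<longlonglongrightarrow> (\<integral>t. ln t * ker s t \<partial>lborel)"
  proof (rule integral_dominated_convergence[where w = w])
    show "(\<lambda>t. ln t * ker s t) \<in> borel_measurable lborel" by measurable
    show "F n \<in> borel_measurable lborel" for n unfolding F_def by measurable
    show "integrable lborel w"
      unfolding w_def by (intro Bochner_Integration.integrable_add integrable_mult_right i1 i2)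
    show "AE t in lborel. (\<lambda>n. F n t) \<longlonglongrightarrow> ln t * ker s t"
    proof (intro AE_I2)
      fix t :: real
      show "(\<lambda>n. F n t) \<longlonglongrightarrow> ln t * ker s t"
      proof (cases "t > 0")
        case True
        have "((\<lambda>x. exp (x * ln t)) has_real_derivative exp (0 * ln t) * ln t) (at 0)"
          by (auto intro!: derivative_eq_intros)
        from deriv_seq[OF this]
        have "(\<lambda>n. (exp (h n * ln t) - 1) / h n) \<longlonglongrightarrow> ln t" by (simp add: h_def)
        then have "(\<lambda>n. ker s t * ((exp (h n * ln t) - 1) / h n)) \<longlonglongrightarrow> ker s t * ln t"
          by (intro tendsto_mult tendsto_const)
        moreover have "F n t = ker s t * ((exp (h n * ln t) - 1) / h n)" for n
          using True h[of n] ker_shift[of t "h n" s, symmetric]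
          by (simp add: F_def powr_def algebra_simps diff_divide_distrib)
        ultimately show ?thesis by (simp add: mult.commute)
      qed (simp add: F_def ker_def)
    qed
    show "AE t in lborel. norm (F n t) \<le> w t" for n
    proof (intro AE_I2)
      fix t :: real
      show "norm (F n t) \<le> w t"
      proof (cases "t > 0")
        case True
        have Fn: "F n t = ker s t * ((exp (h n * ln t) - 1) / h n)"
          using True h[of n] ker_shift[of t "h n" s, symmetric]
          by (simp add: F_def powr_def algebra_simps diff_divide_distrib)
        have "\<bar>exp (h n * ln t) - 1\<bar> \<le> \<bar>h n * ln t\<bar> * (1 + exp (h n * ln t))"
          by (rule exp_m1_bound)
        also have "exp (h n * ln t) \<le> 1 + t"
        proof (cases "ln t \<ge> 0")
          case True
          then have "h n * ln t \<le> 1 * ln t" using h[of n] by (intro mult_right_mono) auto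
          then have "exp (h n * ln t) \<le> exp (ln t)" by simp
          then show ?thesis using \<open>t > 0\<close> by simp
        next
          case False
          then have "h n * ln t \<le> 0" using h[of n] by (simp add: mult_nonneg_nonpos)
          then have "exp (h n * ln t) \<le> 1" by simp
          then show ?thesis using \<open>t>0\<close> by linarith
        qed
        then have "\<bar>h n * ln t\<bar> * (1 + exp (h n * ln t)) \<le> \<bar>h n * ln t\<bar> * (2 + t)"
          by (intro mult_left_mono) auto
        finally have "\<bar>(exp (h n * ln t) - 1) / h n\<bar> \<le> \<bar>ln t\<bar> * (2 + t)"
          using h[of n] by (simp add: abs_mult divide_le_eq mult_ac)
        then have "ker s t * \<bar>(exp (h n * ln t) - 1) / h n\<bar> \<le> ker s t * (\<bar>ln t\<bar> * (2 + t))"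
          using ker_nonneg[of s t] by (rule mult_left_mono)
        also have "\<dots> = w t"
          using ker_shift[of t 1 s] True by (simp add: w_def algebra_simps)
        finally show ?thesis using ker_nonneg[of s t] by (simp add: Fn abs_mult)
      qed (simp add: F_def w_def ker_def)
    qed
  qed
  from LIMSEQ_unique[OF lim2 lim1] show ?thesis .
qed


lemma gamma_dens_meas[measurable]: "gamma_dens a th \<in> borel_measurable borel"
  unfolding gamma_dens_def by measurable

lemma g_std_meas[measurable]: "g_std a \<in> borel_measurable borel"
  unfolding g_std_def by measurable

lemma gamma_dens_nonneg: "a > 0 \<Longrightarrow> th > 0 \<Longrightarrow> gamma_dens a th x \<ge> 0"
  by (simp add: gamma_dens_def less_imp_le)

lemma g_std_ker: "g_std a t = ker a t / Gamma a"
  by (simp add: g_std_def gamma_dens_def ker_def)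

lemma g_std_nonneg: "a > 0 \<Longrightarrow> g_std a t \<ge> 0"
  by (simp add: g_std_ker ker_nonneg less_imp_le)

lemma g_std_pos_imp: "g_std a t \<noteq> 0 \<Longrightarrow> t > 0"
  by (auto simp: g_std_ker ker_def split: if_splits)

lemma dens_scale:
  assumes th: "th > 0"
  shows "th * gamma_dens a th (th * y) = g_std a y"
proof (cases "y > 0")
  case True
  have "(th * y) powr (a - 1) = th powr (a - 1) * y powr (a - 1)"
    using th True by (simp add: powr_mult)
  moreover have "th powr a = th powr (a - 1) * th"
  proof -
    have "th powr a = th powr ((a - 1) + 1)" by simp
    also have "\<dots> = th powr (a - 1) * th powr 1" by (rule powr_add)
    finally show ?thesis using th by simp
  qed
  ultimately show ?thesis using th True
    by (simp add: gamma_dens_def g_std_def field_simps)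
next
  case False
  then show ?thesis using th by (simp add: gamma_dens_def g_std_def zero_less_mult_iff)
qed

definition gm :: "real \<Rightarrow> real measure" where
  "gm a = density lborel (\<lambda>t. ennreal (g_std a t))"

definition pm :: "real \<Rightarrow> real \<Rightarrow> real measure" where
  "pm a th = density lborel (\<lambda>t. ennreal (gamma_dens a th t))"

lemma sets_gm[simp, measurable_cong]: "sets (gm a) = sets borel" by (simp add: gm_def)
lemma space_gm[simp]: "space (gm a) = UNIV" by (simp add: gm_def)

lemma gm_prob: assumes a: "a > 0" shows "prob_space (gm a)"
proof (rule prob_spaceI)
  have G0: "Gamma a \<noteq> 0" using Gamma_real_pos[OF a] by simp
  have "emeasure (gm a) (space (gm a)) = (\<integral>\<^sup>+t. ennreal (g_std a t) \<partial>lborel)"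
    by (simp add: gm_def emeasure_density)
  also have "\<dots> = (\<integral>\<^sup>+t. ennreal (ker a t) * ennreal (1 / Gamma a) \<partial>lborel)"
    using a by (intro nn_integral_cong) (simp add: g_std_ker ennreal_mult'[symmetric] ker_nonneg)
  also have "\<dots> = ennreal (Gamma a) * ennreal (1 / Gamma a)"
    using a G0 by (simp add: nn_integral_multc ker_nn)
  also have "\<dots> = ennreal (Gamma a * (1 / Gamma a))"
    using Gamma_real_pos[OF a] by (subst ennreal_mult) auto
  also have "\<dots> = 1" using G0 by simp
  finally show "emeasure (gm a) (space (gm a)) = 1" .
qed

lemma pm_distr:
  assumes a: "a > 0" and th: "th > 0"
  shows "pm a th = distr (gm a) lborel (\<lambda>y. th * y)"
proof (rule measure_eqI)
  show "sets (pm a th) = sets (distr (gm a) lborel (\<lambda>y. th * y))" by (simp add: pm_def)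
  fix A assume "A \<in> sets (pm a th)"
  then have A[measurable]: "A \<in> sets borel" by (simp add: pm_def)
  have "emeasure (pm a th) A = (\<integral>\<^sup>+x. ennreal (gamma_dens a th x) * indicator A x \<partial>lborel)"
    by (simp add: pm_def emeasure_density)
  also have "\<dots> = ennreal th * (\<integral>\<^sup>+y. ennreal (gamma_dens a th (0 + th * y)) * indicator A (0 + th * y) \<partial>lborel)"
    using th by (subst nn_integral_real_affine[where c=th and t=0]) auto
  also have "\<dots> = (\<integral>\<^sup>+y. ennreal th * (ennreal (gamma_dens a th (th * y)) * indicator A (th * y)) \<partial>lborel)"
    by (simp add: nn_integral_cmult)
  also have "\<dots> = (\<integral>\<^sup>+y. ennreal (g_std a y) * indicator ((\<lambda>y. th * y) -` A) y \<partial>lborel)"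
  proof (intro nn_integral_cong)
    fix y
    show "ennreal th * (ennreal (gamma_dens a th (th * y)) * indicator A (th * y)) =
          ennreal (g_std a y) * indicator ((\<lambda>y. th * y) -` A) y"
      using dens_scale[OF th, of a y] th gamma_dens_nonneg[OF a th, of "th*y"]
      by (simp add: ennreal_mult'[symmetric] mult.assoc[symmetric] indicator_def)
  qed
  also have "\<dots> = emeasure (gm a) ((\<lambda>y. th * y) -` A)"
    unfolding gm_def
    by (rule emeasure_density[symmetric]) (use measurable_sets[of "\<lambda>y. th*y" borel borel A] A in auto)
  also have "\<dots> = emeasure (distr (gm a) lborel (\<lambda>y. th * y)) A"
    by (simp add: emeasure_distr)
  finally show "emeasure (pm a th) A = emeasure (distr (gm a) lborel (\<lambda>y. th * y)) A" .
qed


definition K :: "real \<Rightarrow> real \<Rightarrow> real \<times> real \<Rightarrow> real" where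
  "K th1 th2 y = (if th1 * fst y \<le> th2 * snd y then ln (fst y) else ln (snd y))"

lemma K_meas[measurable]: "K th1 th2 \<in> borel_measurable (borel \<Otimes>\<^sub>M borel)"
  unfolding K_def by measurable

lemma AE_gm_pos: "AE t in gm a. t > 0"
  unfolding gm_def by (subst AE_density) (auto intro!: AE_I2 simp: g_std_ker ker_def split: if_splits)

lemma AE_Q_pos: assumes a: "a > 0" shows "AE y in gm a \<Otimes>\<^sub>M gm a. fst y > 0 \<and> snd y > 0"
proof -
  interpret G: prob_space "gm a" by (rule gm_prob[OF a])
  interpret P: pair_prob_space "gm a" "gm a" ..
  show ?thesis
  proof (rule P.AE_pair_measure)
    show "{x \<in> space (gm a \<Otimes>\<^sub>M gm a). fst x > 0 \<and> snd x > 0} \<in> sets (gm a \<Otimes>\<^sub>M gm a)"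
      by measurable
    show "AE x in gm a. AE y in gm a. fst (x, y) > 0 \<and> snd (x, y) > 0"
      using AE_gm_pos[of a] by eventually_elim (use AE_gm_pos[of a] in auto)
  qed
qed

lemma pm_prob: assumes a: "a > 0" and th: "th > 0" shows "prob_space (pm a th)"
proof -
  interpret G: prob_space "gm a" by (rule gm_prob[OF a])
  show ?thesis unfolding pm_distr[OF a th] by (rule G.prob_space_distr) simp
qed

lemma risk_Q:
  assumes a: "a > 0" and th1: "th1 > 0" and th2: "th2 > 0"
  shows "risk a th1 th2 (d_est c) = (\<integral>\<^sup>+y. ennreal ((K th1 th2 y - c)^2) \<partial>(gm a \<Otimes>\<^sub>M gm a))"
proof -
  define A where "A x = (d_est c (fst x) (snd x) - H_M th1 th2 (fst x) (snd x))\<^sup>2" for x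
  have Am[measurable]: "A \<in> borel_measurable (borel \<Otimes>\<^sub>M borel)"
    unfolding A_def d_est_def H_M_def by measurable
  have sf: "sigma_finite_measure (pm a th2)"
    by (rule prob_space_imp_sigma_finite[OF pm_prob[OF a th2]])
  have dens: "pm a th1 \<Otimes>\<^sub>M pm a th2 =
      density (lborel \<Otimes>\<^sub>M lborel) (\<lambda>(x,y). ennreal (gamma_dens a th1 x) * ennreal (gamma_dens a th2 y))"
    unfolding pm_def by (rule pair_measure_density) (auto simp: pm_def[symmetric] sf lborel.sigma_finite_measure_axioms)
  have "risk a th1 th2 (d_est c) = (\<integral>\<^sup>+x. ennreal (gamma_dens a th1 (fst x)) * ennreal (gamma_dens a th2 (snd x)) * ennreal (A x) \<partial>(lborel \<Otimes>\<^sub>M lborel))"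
    unfolding risk_def A_def
    using gamma_dens_nonneg[OF a th1] gamma_dens_nonneg[OF a th2]
    by (intro nn_integral_cong) (simp add: ennreal_mult'[symmetric] mult_ac)
  also have "\<dots> = (\<integral>\<^sup>+x. ennreal (A x) \<partial>(pm a th1 \<Otimes>\<^sub>M pm a th2))"
    unfolding dens by (subst nn_integral_density) (auto simp: split_beta')
  also have "pm a th1 \<Otimes>\<^sub>M pm a th2 = distr (gm a \<Otimes>\<^sub>M gm a) (lborel \<Otimes>\<^sub>M lborel) (\<lambda>(x,y). (th1 * x, th2 * y))"
    unfolding pm_distr[OF a th1] pm_distr[OF a th2]
    by (rule pair_measure_distr) (auto simp: pm_distr[OF a th2, symmetric] sf)
  also have "(\<integral>\<^sup>+x. ennreal (A x) \<partial>distr (gm a \<Otimes>\<^sub>M gm a) (lborel \<Otimes>\<^sub>M lborel) (\<lambda>(x,y). (th1 * x, th2 * y)))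
      = (\<integral>\<^sup>+y. ennreal (A (th1 * fst y, th2 * snd y)) \<partial>(gm a \<Otimes>\<^sub>M gm a))"
    by (subst nn_integral_distr) (auto simp: split_beta')
  also have "\<dots> = (\<integral>\<^sup>+y. ennreal ((K th1 th2 y - c)^2) \<partial>(gm a \<Otimes>\<^sub>M gm a))"
  proof (rule nn_integral_cong_AE)
    show "AE y in gm a \<Otimes>\<^sub>M gm a. ennreal (A (th1 * fst y, th2 * snd y)) = ennreal ((K th1 th2 y - c)^2)"
      using AE_Q_pos[OF a]
    proof eventually_elim
      case (elim y)
      then show ?case using th1 th2
        by (auto simp: A_def d_est_def H_M_def K_def ln_mult min_def)
    qed
  qed
  finally show ?thesis .
qed


lemma gm_ln: assumes a: "a > 0"
  shows "integrable (gm a) ln" "integrable (gm a) (\<lambda>t. (ln t)^2)" "integral\<^sup>L (gm a) ln = Digamma a"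
proof -
  have gnn: "AE x in lborel. 0 \<le> g_std a x" using g_std_nonneg[OF a] by simp
  have "integrable lborel (\<lambda>t. ln t * ker a t / Gamma a)"
    using ln_ker_int[OF a] by (rule integrable_divide)
  then have "integrable lborel (\<lambda>t. g_std a t * ln t)" by (simp add: g_std_ker mult_ac)
  then show "integrable (gm a) ln" unfolding gm_def by (subst integrable_real_density) (use gnn in auto)
  have "integrable lborel (\<lambda>t. (ln t)^2 * ker a t / Gamma a)"
    using ln2_ker_int[OF a] by (rule integrable_divide)
  then have "integrable lborel (\<lambda>t. g_std a t * (ln t)^2)" by (simp add: g_std_ker mult_ac)
  then show "integrable (gm a) (\<lambda>t. (ln t)^2)" unfolding gm_def by (subst integrable_real_density) (use gnn in auto)
  have "integral\<^sup>L (gm a) ln = (\<integral>t. g_std a t * ln t \<partial>lborel)"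
    unfolding gm_def by (subst integral_real_density) (use gnn in auto)
  also have "\<dots> = (\<integral>t. ln t * ker a t \<partial>lborel) / Gamma a"
    by (simp add: g_std_ker mult_ac)
  also have "\<dots> = Digamma a" using a less_imp_neq[OF Gamma_real_pos[OF a]] by (simp add: ln_ker_integral)
  finally show "integral\<^sup>L (gm a) ln = Digamma a" .
qed

lemma distr_Q_fst: assumes a: "a > 0" shows "distr (gm a \<Otimes>\<^sub>M gm a) (gm a) fst = gm a"
proof -
  interpret G: prob_space "gm a" by (rule gm_prob[OF a])
  show ?thesis by (rule G.distr_pair_fst)
qed

lemma distr_Q_snd: assumes a: "a > 0" shows "distr (gm a \<Otimes>\<^sub>M gm a) (gm a) snd = gm a"
proof -
  interpret G: prob_space "gm a" by (rule gm_prob[OF a])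
  interpret P: pair_prob_space "gm a" "gm a" ..
  show ?thesis
  proof (intro measure_eqI)
    fix A assume A: "A \<in> sets (distr (gm a \<Otimes>\<^sub>M gm a) (gm a) snd)"
    from A have "emeasure (distr (gm a \<Otimes>\<^sub>M gm a) (gm a) snd) A = emeasure (gm a \<Otimes>\<^sub>M gm a) (space (gm a) \<times> A)"
      by (auto simp add: emeasure_distr space_pair_measure dest: sets.sets_into_space intro!: arg_cong2[where f=emeasure])
    with A show "emeasure (distr (gm a \<Otimes>\<^sub>M gm a) (gm a) snd) A = emeasure (gm a) A"
      by (simp add: G.emeasure_pair_measure_Times G.emeasure_space_1[simplified])
  qed simp
qed

lemma Q_fst:
  fixes f :: "real \<Rightarrow> real" assumes a: "a > 0" and f[measurable]: "f \<in> borel_measurable borel" and i: "integrable (gm a) f"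
  shows "integrable (gm a \<Otimes>\<^sub>M gm a) (\<lambda>y. f (fst y))" "(\<integral>y. f (fst y) \<partial>(gm a \<Otimes>\<^sub>M gm a)) = integral\<^sup>L (gm a) f"
proof -
  have fm: "f \<in> borel_measurable (gm a)" by simp
  show "integrable (gm a \<Otimes>\<^sub>M gm a) (\<lambda>y. f (fst y))"
    using i integrable_distr_eq[of fst "gm a \<Otimes>\<^sub>M gm a" "gm a" f] fm by (simp add: distr_Q_fst[OF a])
  show "(\<integral>y. f (fst y) \<partial>(gm a \<Otimes>\<^sub>M gm a)) = integral\<^sup>L (gm a) f"
    using integral_distr[of fst "gm a \<Otimes>\<^sub>M gm a" "gm a" f] fm by (simp add: distr_Q_fst[OF a])
qed

lemma Q_snd:
  fixes f :: "real \<Rightarrow> real" assumes a: "a > 0" and f[measurable]: "f \<in> borel_measurable borel" and i: "integrable (gm a) f"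
  shows "integrable (gm a \<Otimes>\<^sub>M gm a) (\<lambda>y. f (snd y))" "(\<integral>y. f (snd y) \<partial>(gm a \<Otimes>\<^sub>M gm a)) = integral\<^sup>L (gm a) f"
proof -
  have fm: "f \<in> borel_measurable (gm a)" by simp
  show "integrable (gm a \<Otimes>\<^sub>M gm a) (\<lambda>y. f (snd y))"
    using i integrable_distr_eq[of snd "gm a \<Otimes>\<^sub>M gm a" "gm a" f] fm by (simp add: distr_Q_snd[OF a])
  show "(\<integral>y. f (snd y) \<partial>(gm a \<Otimes>\<^sub>M gm a)) = integral\<^sup>L (gm a) f"
    using integral_distr[of snd "gm a \<Otimes>\<^sub>M gm a" "gm a" f] fm by (simp add: distr_Q_snd[OF a])
qed


abbreviation Q :: "real \<Rightarrow> (real \<times> real) measure" where "Q a \<equiv> gm a \<Otimes>\<^sub>M gm a"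

definition mm :: "real \<Rightarrow> real \<Rightarrow> real \<Rightarrow> real" where
  "mm a th1 th2 = (\<integral>y. K th1 th2 y \<partial>Q a)"

definition VV :: "real \<Rightarrow> real \<Rightarrow> real \<Rightarrow> real" where
  "VV a th1 th2 = (\<integral>y. (K th1 th2 y)^2 \<partial>Q a)"

lemma K_cases: "K th1 th2 y = ln (fst y) \<or> K th1 th2 y = ln (snd y)"
  by (simp add: K_def)

lemma Q_lns: assumes a: "a > 0"
  shows "integrable (Q a) (\<lambda>y. \<bar>ln (fst y)\<bar> + \<bar>ln (snd y)\<bar>)"
    "integrable (Q a) (\<lambda>y. (ln (fst y))^2 + (ln (snd y))^2)"
    "integrable (Q a) (\<lambda>y. ln (fst y))" "integrable (Q a) (\<lambda>y. ln (snd y))"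
    "(\<integral>y. ln (fst y) \<partial>Q a) = Digamma a" "(\<integral>y. ln (snd y) \<partial>Q a) = Digamma a"
proof -
  note i1 = Q_fst[OF a _ gm_ln(1)[OF a]] Q_snd[OF a _ gm_ln(1)[OF a]]
  note i2 = Q_fst[OF a _ gm_ln(2)[OF a]] Q_snd[OF a _ gm_ln(2)[OF a]]
  show "integrable (Q a) (\<lambda>y. ln (fst y))" "integrable (Q a) (\<lambda>y. ln (snd y))"
    "(\<integral>y. ln (fst y) \<partial>Q a) = Digamma a" "(\<integral>y. ln (snd y) \<partial>Q a) = Digamma a"
    using i1 gm_ln(3)[OF a] by auto
  show "integrable (Q a) (\<lambda>y. \<bar>ln (fst y)\<bar> + \<bar>ln (snd y)\<bar>)"
    using i1 by (intro Bochner_Integration.integrable_add integrable_abs) auto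
  show "integrable (Q a) (\<lambda>y. (ln (fst y))^2 + (ln (snd y))^2)"
    using i2 by (intro Bochner_Integration.integrable_add) auto
qed

lemma K_int: assumes a: "a > 0"
  shows "integrable (Q a) (K th1 th2)" "integrable (Q a) (\<lambda>y. (K th1 th2 y)^2)"
proof -
  show "integrable (Q a) (K th1 th2)"
  proof (rule Bochner_Integration.integrable_bound[OF Q_lns(1)[OF a]])
    show "K th1 th2 \<in> borel_measurable (Q a)" by measurable
    show "AE x in Q a. norm (K th1 th2 x) \<le> norm (\<bar>ln (fst x)\<bar> + \<bar>ln (snd x)\<bar>)"
      by (intro AE_I2) (auto simp: K_def)
  qed
  show "integrable (Q a) (\<lambda>y. (K th1 th2 y)^2)"
  proof (rule Bochner_Integration.integrable_bound[OF Q_lns(2)[OF a]])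
    show "(\<lambda>y. (K th1 th2 y)^2) \<in> borel_measurable (Q a)" by measurable
    show "AE x in Q a. norm ((K th1 th2 x)^2) \<le> norm ((ln (fst x))^2 + (ln (snd x))^2)"
      by (intro AE_I2) (auto simp: K_def)
  qed
qed

lemma risk_real:
  assumes a: "a > 0" and th1: "th1 > 0" and th2: "th2 > 0"
  shows "risk a th1 th2 (d_est c) = ennreal (VV a th1 th2 - 2 * c * mm a th1 th2 + c^2)"
    "VV a th1 th2 - 2 * c * mm a th1 th2 + c^2 \<ge> 0"
proof -
  interpret G: prob_space "gm a" by (rule gm_prob[OF a])
  interpret P: pair_prob_space "gm a" "gm a" ..
  have eq: "(\<lambda>y. (K th1 th2 y - c)^2) = (\<lambda>y. (K th1 th2 y)^2 - 2 * c * K th1 th2 y + c^2)"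
    by (auto simp: power2_eq_square algebra_simps)
  have int: "integrable (Q a) (\<lambda>y. (K th1 th2 y - c)^2)"
    unfolding eq using K_int[OF a, of th1 th2]
    by (intro Bochner_Integration.integrable_add Bochner_Integration.integrable_diff integrable_mult_right) auto
  have ival: "(\<integral>y. (K th1 th2 y - c)^2 \<partial>Q a) = VV a th1 th2 - 2 * c * mm a th1 th2 + c^2"
    unfolding eq using K_int[OF a, of th1 th2]
    by (simp add: VV_def mm_def P.prob_space)
  have "risk a th1 th2 (d_est c) = ennreal (\<integral>y. (K th1 th2 y - c)^2 \<partial>Q a)"
    unfolding risk_Q[OF a th1 th2] by (rule nn_integral_eq_integral[OF int]) auto
  then show "risk a th1 th2 (d_est c) = ennreal (VV a th1 th2 - 2 * c * mm a th1 th2 + c^2)"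
    by (simp add: ival)
  have "0 \<le> (\<integral>y. (K th1 th2 y - c)^2 \<partial>Q a)" by (rule Bochner_Integration.integral_nonneg) auto
  then show "VV a th1 th2 - 2 * c * mm a th1 th2 + c^2 \<ge> 0" by (simp add: ival)
qed

lemma risk_le_iff:
  assumes a: "a > 0" and th1: "th1 > 0" and th2: "th2 > 0"
  shows "risk a th1 th2 (d_est c') \<le> risk a th1 th2 (d_est c) \<longleftrightarrow>
         c'^2 - 2 * c' * mm a th1 th2 \<le> c^2 - 2 * c * mm a th1 th2"
  using risk_real[OF a th1 th2, of c] risk_real[OF a th1 th2, of c']
  by (simp add: ennreal_le_iff)

lemma risk_less_iff:
  assumes a: "a > 0" and th1: "th1 > 0" and th2: "th2 > 0"
  shows "risk a th1 th2 (d_est c') < risk a th1 th2 (d_est c) \<longleftrightarrow>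
         c'^2 - 2 * c' * mm a th1 th2 < c^2 - 2 * c * mm a th1 th2"
  using risk_real[OF a th1 th2, of c] risk_real[OF a th1 th2, of c']
  by (simp add: ennreal_less_iff)


lemma mm_le_Digamma:
  assumes a: "a > 0" and th1: "th1 > 0" and th2: "th2 > 0"
  shows "mm a th1 th2 \<le> Digamma a"
proof (cases "th1 \<le> th2")
  case True
  have "mm a th1 th2 \<le> (\<integral>y. ln (fst y) \<partial>Q a)"
    unfolding mm_def
  proof (rule integral_mono_AE[OF K_int(1)[OF a] Q_lns(3)[OF a]])
    show "AE y in Q a. K th1 th2 y \<le> ln (fst y)"
      using AE_Q_pos[OF a]
    proof eventually_elim
      case (elim y)
      show ?case
      proof (cases "th1 * fst y \<le> th2 * snd y")
        case False
        then have "th2 * snd y < th1 * fst y" by simp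
        also have "\<dots> \<le> th2 * fst y" using True elim by (intro mult_right_mono) auto
        finally have "snd y < fst y" using th2 by simp
        then show ?thesis using False elim by (simp add: K_def)
      qed (simp add: K_def)
    qed
  qed
  then show ?thesis using Q_lns(5)[OF a] by simp
next
  case False
  have "mm a th1 th2 \<le> (\<integral>y. ln (snd y) \<partial>Q a)"
    unfolding mm_def
  proof (rule integral_mono_AE[OF K_int(1)[OF a] Q_lns(4)[OF a]])
    show "AE y in Q a. K th1 th2 y \<le> ln (snd y)"
      using AE_Q_pos[OF a]
    proof eventually_elim
      case (elim y)
      show ?case
      proof (cases "th1 * fst y \<le> th2 * snd y")
        case True
        have "th1 * fst y \<le> th2 * snd y" by fact
        also have "\<dots> \<le> th1 * snd y" using False elim by (intro mult_right_mono) auto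
        finally have "fst y \<le> snd y" using th1 by simp
        then show ?thesis using True elim by (simp add: K_def)
      qed (simp add: K_def)
    qed
  qed
  then show ?thesis using Q_lns(6)[OF a] by simp
qed

lemma mm_ge_mm11:
  assumes a: "a > 0"
  shows "mm a 1 1 \<le> mm a th1 th2"
  unfolding mm_def
proof (rule integral_mono_AE[OF K_int(1)[OF a] K_int(1)[OF a]])
  show "AE y in Q a. K 1 1 y \<le> K th1 th2 y"
    using AE_Q_pos[OF a]
  proof eventually_elim
    case (elim y)
    then show ?case by (auto simp: K_def)
  qed
qed

lemma mm_tendsto:
  assumes a: "a > 0"
  shows "(\<lambda>n. mm a 1 (real n + 1)) \<longlonglongrightarrow> Digamma a"
proof -
  have "(\<lambda>n. mm a 1 (real n + 1)) \<longlonglongrightarrow> (\<integral>y. ln (fst y) \<partial>Q a)"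
    unfolding mm_def
  proof (rule integral_dominated_convergence[where w = "\<lambda>y. \<bar>ln (fst y)\<bar> + \<bar>ln (snd y)\<bar>"])
    show "(\<lambda>y. ln (fst y)) \<in> borel_measurable (Q a)" by measurable
    show "K 1 (real n + 1) \<in> borel_measurable (Q a)" for n by measurable
    show "integrable (Q a) (\<lambda>y. \<bar>ln (fst y)\<bar> + \<bar>ln (snd y)\<bar>)" by (rule Q_lns(1)[OF a])
    show "AE y in Q a. norm (K 1 (real n + 1) y) \<le> \<bar>ln (fst y)\<bar> + \<bar>ln (snd y)\<bar>" for n
      by (intro AE_I2) (auto simp: K_def)
    show "AE y in Q a. (\<lambda>n. K 1 (real n + 1) y) \<longlonglongrightarrow> ln (fst y)"
      using AE_Q_pos[OF a]
    proof eventually_elim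
      case (elim y)
      obtain N :: nat where N: "fst y / snd y < real N" using reals_Archimedean2 by blast
      have "eventually (\<lambda>n. K 1 (real n + 1) y = ln (fst y)) sequentially"
        unfolding eventually_sequentially
      proof (intro exI allI impI)
        fix n assume "N \<le> n"
        then have "fst y / snd y \<le> real n + 1" using N by linarith
        then have "fst y \<le> (real n + 1) * snd y" using elim by (simp add: divide_le_eq)
        then show "K 1 (real n + 1) y = ln (fst y)" by (simp add: K_def)
      qed
      then show ?case by (rule tendsto_eventually)
    qed
  qed
  then show ?thesis using Q_lns(5)[OF a] by simp
qed


lemma G_std_mono: assumes a: "a > 0" shows "mono (G_std a)"
proof (rule monoI)
  fix x y :: real assume xy: "x \<le> y"
  have gi: "integrable lborel (g_std a)"
    using integrable_divide[OF ker_int(1)[OF a], of "Gamma a"] by (simp add: g_std_ker[abs_def])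
  have "(LBINT t:{0..x}. g_std a t) \<le> (LBINT t:{0..y}. g_std a t)"
    unfolding set_lebesgue_integral_def
  proof (rule integral_mono)
    show "integrable lborel (\<lambda>t. indicator {0..x} t *\<^sub>R g_std a t)"
      by (rule Bochner_Integration.integrable_bound[OF gi]) (auto simp: indicator_def g_std_nonneg[OF a])
    show "integrable lborel (\<lambda>t. indicator {0..y} t *\<^sub>R g_std a t)"
      by (rule Bochner_Integration.integrable_bound[OF gi]) (auto simp: indicator_def g_std_nonneg[OF a])
    show "indicator {0..x} t *\<^sub>R g_std a t \<le> indicator {0..y} t *\<^sub>R g_std a t" for t
      using xy g_std_nonneg[OF a, of t] by (auto simp: indicator_def)
  qed
  then show "G_std a x \<le> G_std a y" by (simp add: G_std_def)
qed

lemma G_std_meas[measurable]: assumes a: "a > 0" shows "G_std a \<in> borel_measurable borel"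
  by (rule borel_measurable_mono[OF G_std_mono[OF a]])

lemma measure_gm_atMost: assumes a: "a > 0" shows "measure (gm a) {..x} = G_std a x"
proof -
  have gnn: "AE t in lborel. 0 \<le> g_std a t" using g_std_nonneg[OF a] by simp
  have "measure (gm a) {..x} = integral\<^sup>L (gm a) (indicator {..x})" by simp
  also have "\<dots> = (\<integral>t. g_std a t * indicator {..x} t \<partial>lborel)"
    unfolding gm_def by (subst integral_real_density) (use gnn in auto)
  also have "\<dots> = (\<integral>t. indicator {0..x} t *\<^sub>R g_std a t \<partial>lborel)"
    by (intro Bochner_Integration.integral_cong) (auto simp: indicator_def g_std_ker ker_def)
  finally show ?thesis by (simp add: G_std_def set_lebesgue_integral_def)
qed

lemma measure_gm_sing: assumes a: "a > 0" shows "measure (gm a) {x} = 0"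
proof -
  have gnn: "AE t in lborel. 0 \<le> g_std a t" using g_std_nonneg[OF a] by simp
  have "measure (gm a) {x} = integral\<^sup>L (gm a) (indicator {x})" by simp
  also have "\<dots> = (\<integral>t. g_std a t * indicator {x} t \<partial>lborel)"
    unfolding gm_def by (subst integral_real_density) (use gnn in auto)
  also have "\<dots> = (\<integral>t. 0 \<partial>(lborel::real measure))"
  proof (rule integral_cong_AE)
    show "AE t in lborel. g_std a t * indicator {x} t = 0"
      using AE_lborel_singleton[of x] by eventually_elim auto
  qed auto
  finally show ?thesis by simp
qed

lemma measure_gm_tails: assumes a: "a > 0"
  shows "measure (gm a) {x<..} = 1 - G_std a x" "measure (gm a) {x..} = 1 - G_std a x"
proof -
  interpret G: prob_space "gm a" by (rule gm_prob[OF a])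
  have "measure (gm a) (space (gm a) - {..x}) = 1 - measure (gm a) {..x}"
    by (rule G.prob_compl) simp
  moreover have "space (gm a) - {..x} = {x<..}" by auto
  ultimately show t: "measure (gm a) {x<..} = 1 - G_std a x" by (simp add: measure_gm_atMost[OF a])
  have "measure (gm a) ({x} \<union> {x<..}) = measure (gm a) {x} + measure (gm a) {x<..}"
    by (rule G.finite_measure_Union) auto
  moreover have "{x} \<union> {x<..} = {x..}" by auto
  ultimately show "measure (gm a) {x..} = 1 - G_std a x" by (simp add: t measure_gm_sing[OF a])
qed


lemma mm11_c3: assumes a: "a > 0" shows "mm a 1 1 = c3 a"
proof -
  interpret G: prob_space "gm a" by (rule gm_prob[OF a])
  interpret P: pair_prob_space "gm a" "gm a" ..
  define f1 where "f1 y = (if fst y \<le> snd y then ln (fst y) else 0)" for y :: "real \<times> real"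
  define f2 where "f2 y = (if snd y < fst y then ln (snd y) else 0)" for y :: "real \<times> real"
  define f3 where "f3 y = (if fst y < snd y then ln (fst y) else 0)" for y :: "real \<times> real"
  have [measurable]: "f1 \<in> borel_measurable (Q a)" "f2 \<in> borel_measurable (Q a)" "f3 \<in> borel_measurable (Q a)"
    unfolding f1_def f2_def f3_def by measurable
  have int: "integrable (Q a) f" if "f \<in> borel_measurable (Q a)" "\<And>y. \<bar>f y\<bar> \<le> \<bar>ln (fst y)\<bar> + \<bar>ln (snd y)\<bar>" for f
    by (rule Bochner_Integration.integrable_bound[OF Q_lns(1)[OF a]]) (use that in auto)
  have i1: "integrable (Q a) f1" by (rule int) (auto simp: f1_def)
  have i2: "integrable (Q a) f2" by (rule int) (auto simp: f2_def)
  have i3: "integrable (Q a) f3" by (rule int) (auto simp: f3_def)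
  have "mm a 1 1 = (\<integral>y. f1 y + f2 y \<partial>Q a)"
    unfolding mm_def by (intro Bochner_Integration.integral_cong) (auto simp: K_def f1_def f2_def)
  also have "\<dots> = integral\<^sup>L (Q a) f1 + integral\<^sup>L (Q a) f2"
    by (rule Bochner_Integration.integral_add[OF i1 i2])
  also have "integral\<^sup>L (Q a) f2 = integral\<^sup>L (Q a) f3"
  proof -
    have "integral\<^sup>L (Q a) f3 = (\<integral>(x,y). f3 (y,x) \<partial>Q a)"
      by (rule P.integral_product_swap[symmetric]) simp
    also have "\<dots> = integral\<^sup>L (Q a) f2"
      by (intro Bochner_Integration.integral_cong) (auto simp: f2_def f3_def)
    finally show ?thesis ..
  qed
  also have "integral\<^sup>L (Q a) f1 = (\<integral>x. (\<integral>y. f1 (x,y) \<partial>gm a) \<partial>gm a)"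
    by (rule P.integral_fst'[OF i1, symmetric])
  also have "\<dots> = (\<integral>x. ln x * (1 - G_std a x) \<partial>gm a)"
  proof (intro Bochner_Integration.integral_cong refl)
    fix x
    have "(\<integral>y. f1 (x,y) \<partial>gm a) = (\<integral>y. ln x * indicator {x..} y \<partial>gm a)"
      by (intro Bochner_Integration.integral_cong) (auto simp: f1_def indicator_def)
    also have "\<dots> = ln x * measure (gm a) {x..}" by simp
    finally show "(\<integral>y. f1 (x,y) \<partial>gm a) = ln x * (1 - G_std a x)" by (simp add: measure_gm_tails[OF a])
  qed
  also have "integral\<^sup>L (Q a) f3 = (\<integral>x. (\<integral>y. f3 (x,y) \<partial>gm a) \<partial>gm a)"
    by (rule P.integral_fst'[OF i3, symmetric])
  also have "\<dots> = (\<integral>x. ln x * (1 - G_std a x) \<partial>gm a)"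
  proof (intro Bochner_Integration.integral_cong refl)
    fix x
    have "(\<integral>y. f3 (x,y) \<partial>gm a) = (\<integral>y. ln x * indicator {x<..} y \<partial>gm a)"
      by (intro Bochner_Integration.integral_cong) (auto simp: f3_def indicator_def)
    also have "\<dots> = ln x * measure (gm a) {x<..}" by simp
    finally show "(\<integral>y. f3 (x,y) \<partial>gm a) = ln x * (1 - G_std a x)" by (simp add: measure_gm_tails[OF a])
  qed
  also have "(\<integral>x. ln x * (1 - G_std a x) \<partial>gm a) = (\<integral>x. g_std a x * (ln x * (1 - G_std a x)) \<partial>lborel)"
    unfolding gm_def using G_std_meas[OF a]
    by (subst integral_real_density) (auto simp: g_std_nonneg[OF a])
  also have "\<dots> = (LBINT z:{0<..}. ln z * (1 - G_std a z) * g_std a z)"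
    unfolding set_lebesgue_integral_def
    by (intro Bochner_Integration.integral_cong) (auto simp: indicator_def g_std_ker ker_def)
  finally show ?thesis by (simp add: c3_def)
qed


lemma gm_id: assumes a: "a > 0" shows "integrable (gm a) (\<lambda>t. t)" "(\<integral>t. t \<partial>gm a) = a"
proof -
  have gnn: "AE t in lborel. 0 \<le> g_std a t" using g_std_nonneg[OF a] by simp
  have eq: "(\<lambda>t. g_std a t * t) = (\<lambda>t. ker (a+1) t / Gamma a)"
  proof
    fix t show "g_std a t * t = ker (a+1) t / Gamma a"
    proof (cases "t > 0")
      case True
      have "t powr 1 * ker a t = ker (a+1) t" by (rule ker_shift)
      then show ?thesis using True by (simp add: g_std_ker mult.commute)
    qed (simp add: g_std_ker ker_def)
  qed
  have "integrable lborel (\<lambda>t. g_std a t * t)" unfolding eq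
    using a by (intro integrable_divide ker_int(1)) auto
  then show "integrable (gm a) (\<lambda>t. t)" unfolding gm_def by (subst integrable_real_density) (use gnn in auto)
  have "(\<integral>t. t \<partial>gm a) = (\<integral>t. g_std a t * t \<partial>lborel)"
    unfolding gm_def by (subst integral_real_density) (use gnn in auto)
  also have "\<dots> = Gamma (a+1) / Gamma a" unfolding eq using a by (simp add: ker_int(2))
  also have "\<dots> = a" using a Gamma_plus1[of a] not_nonpos_Int_pos[OF a] less_imp_neq[OF Gamma_real_pos[OF a]] by simp
  finally show "(\<integral>t. t \<partial>gm a) = a" .
qed

lemma Digamma_le_ln: assumes a: "a > (0::real)" shows "Digamma a \<le> ln a"
proof -
  interpret G: prob_space "gm a" by (rule gm_prob[OF a])
  have "Digamma a = (\<integral>t. ln t \<partial>gm a)" using gm_ln(3)[OF a] by simp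
  also have "\<dots> \<le> (\<integral>t. (ln a - 1) + t / a \<partial>gm a)"
  proof (rule integral_mono_AE)
    show "integrable (gm a) ln" by (rule gm_ln(1)[OF a])
    show "integrable (gm a) (\<lambda>t. (ln a - 1) + t / a)"
      using gm_id(1)[OF a] by (intro Bochner_Integration.integrable_add integrable_divide) auto
    show "AE t in gm a. ln t \<le> (ln a - 1) + t / a"
      using AE_gm_pos[of a]
    proof eventually_elim
      case (elim t)
      have "ln (t / a) \<le> t / a - 1" using elim a by (intro ln_le_minus_one) auto
      then show ?case using elim a by (simp add: ln_div)
    qed
  qed
  also have "\<dots> = ln a" using gm_id[OF a] a by (simp add: G.prob_space[simplified])
  finally show ?thesis .
qed

lemma Digamma_lt_ln: assumes a: "a > (0::real)" shows "Digamma a < ln a"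
proof -
  have "Digamma (a + 1) = Digamma a + 1 / a" using a by (intro Digamma_plus1) auto
  then have "Digamma a = Digamma (a+1) - 1/a" by simp
  also have "\<dots> \<le> ln (a + 1) - 1/a" using Digamma_le_ln[of "a+1"] a by simp
  also have "ln (a + 1) = ln a + ln (1 + 1/a)"
  proof -
    have "a + 1 = a * (1 + 1/a)" using a by (simp add: field_simps)
    then have "ln (a + 1) = ln (a * (1 + 1/a))" by simp
    also have "\<dots> = ln a + ln (1 + 1/a)" using a by (intro ln_mult_pos) (auto intro: add_pos_pos)
    finally show ?thesis .
  qed
  also have "ln (1 + 1/a) < 1/a" using a by (intro ln_add_one_self_less_self) auto
  finally show ?thesis by simp
qed

lemma Digamma_inv_eq:
  assumes x: "x > 0" shows "Digamma_inv (Digamma x) = x"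
  unfolding Digamma_inv_def
proof (rule the_equality)
  fix y assume y: "y > 0 \<and> Digamma y = Digamma x"
  show "y = x"
  proof (rule ccontr)
    assume "y \<noteq> x"
    then have "y < x \<or> x < y" by auto
    then show False using y x Digamma_real_strict_mono[of y x] Digamma_real_strict_mono[of x y] by auto
  qed
qed (use x in auto)

lemma Digamma_hits:
  fixes a c :: real
  assumes a: "a > 0" and c: "c \<le> Digamma a"
  shows "\<exists>x. 0 < x \<and> x \<le> a \<and> Digamma x = c"
proof -
  define x1 where "x1 = min a (min 1 (1 / (\<bar>Digamma 2\<bar> + \<bar>c\<bar> + 1)))"
  have x1le1: "x1 \<le> 1" unfolding x1_def by (rule order.trans[OF min.cobounded2 min.cobounded1])
  have x1: "0 < x1" "x1 \<le> a" "x1 \<le> 1" using a x1le1 by (auto simp: x1_def)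
  have "x1 \<le> 1 / (\<bar>Digamma 2\<bar> + \<bar>c\<bar> + 1)" by (simp add: x1_def)
  then have "\<bar>Digamma 2\<bar> + \<bar>c\<bar> + 1 \<le> 1 / x1" using x1(1) by (simp add: field_simps)
  moreover have "Digamma (x1 + 1) = Digamma x1 + 1 / x1" using x1 by (intro Digamma_plus1) auto
  moreover have "Digamma (x1 + 1) \<le> Digamma 2" using x1 by (intro Digamma_real_mono) auto
  ultimately have lo: "Digamma x1 \<le> c" by linarith
  have "continuous_on {x1..a} (Digamma :: real \<Rightarrow> real)"
    using x1 by (intro continuous_on_Polygamma) (auto elim!: nonpos_Ints_cases)
  from IVT'[of Digamma x1 c a, OF lo c x1(2) this] obtain x where "x1 \<le> x" "x \<le> a" "Digamma x = c" by auto
  then show ?thesis using x1 by (intro exI[of _ x]) auto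
qed

lemma dom_meas: "(\<lambda>x. d_est c (fst x) (snd x)) \<in> borel_measurable (lborel \<Otimes>\<^sub>M lborel)"
  unfolding d_est_def by measurable

lemma dominatesI:
  assumes a: "a > 0" and
    le: "\<And>m. mm a 1 1 \<le> m \<Longrightarrow> m \<le> Digamma a \<Longrightarrow> c'^2 - 2 * c' * m \<le> c^2 - 2 * c * m"
    and lt: "c'^2 - 2 * c' * mm a 1 1 < c^2 - 2 * c * mm a 1 1"
  shows "dominates a (d_est c') (d_est c)" "inadmissible a (d_est c)"
proof -
  show d: "dominates a (d_est c') (d_est c)"
    unfolding dominates_def
  proof (intro conjI allI impI)
    fix th1 th2 :: real assume th: "th1 > 0" "th2 > 0"
    show "risk a th1 th2 (d_est c') \<le> risk a th1 th2 (d_est c)"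
      using th by (subst risk_le_iff[OF a]) (auto intro!: le mm_ge_mm11[OF a] mm_le_Digamma[OF a])
  next
    show "\<exists>th1>0. \<exists>th2>0. risk a th1 th2 (d_est c') < risk a th1 th2 (d_est c)"
      using lt by (intro exI[of _ 1] conjI) (simp_all add: risk_less_iff[OF a])
  qed
  show "inadmissible a (d_est c)"
    unfolding inadmissible_def using d dom_meas by blast
qed

lemma dom_right:
  assumes a: "a > 0" and c: "c > Digamma a"
  shows "dominates a (d_est (Digamma a)) (d_est c)" "inadmissible a (d_est c)"
proof -
  have ps: "mm a 1 1 \<le> Digamma a" by (rule mm_le_Digamma[OF a]) auto
  have key: "(Digamma a)^2 - 2 * Digamma a * m - (c^2 - 2 * c * m) = (Digamma a - c) * (Digamma a + c - 2 * m)" for m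
    by (simp add: power2_eq_square algebra_simps)
  have le: "(Digamma a)^2 - 2 * Digamma a * m \<le> c^2 - 2 * c * m" if "m \<le> Digamma a" for m
  proof -
    have "(Digamma a - c) * (Digamma a + c - 2 * m) \<le> 0"
      using c that by (intro mult_nonpos_nonneg) auto
    then show ?thesis using key[of m] by linarith
  qed
  have lt: "(Digamma a)^2 - 2 * Digamma a * mm a 1 1 < c^2 - 2 * c * mm a 1 1"
  proof -
    have "(Digamma a - c) * (Digamma a + c - 2 * mm a 1 1) < 0"
      using c ps by (intro mult_neg_pos) auto
    then show ?thesis using key[of "mm a 1 1"] by linarith
  qed
  show "dominates a (d_est (Digamma a)) (d_est c)" "inadmissible a (d_est c)"
    using dominatesI[OF a le lt] by auto
qed

lemma dom_left:
  assumes a: "a > 0" and c: "c < c3 a"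
  shows "dominates a (d_est (c3 a)) (d_est c)" "inadmissible a (d_est c)"
proof -
  have key: "(c3 a)^2 - 2 * c3 a * m - (c^2 - 2 * c * m) = (c3 a - c) * (c3 a + c - 2 * m)" for m
    by (simp add: power2_eq_square algebra_simps)
  have le: "(c3 a)^2 - 2 * c3 a * m \<le> c^2 - 2 * c * m" if "mm a 1 1 \<le> m" for m
  proof -
    have "(c3 a - c) * (c3 a + c - 2 * m) \<le> 0"
      using c that mm11_c3[OF a] by (intro mult_nonneg_nonpos) auto
    then show ?thesis using key[of m] by linarith
  qed
  have lt: "(c3 a)^2 - 2 * c3 a * mm a 1 1 < c^2 - 2 * c * mm a 1 1"
  proof -
    have "(c3 a - c) * (c3 a + c - 2 * mm a 1 1) < 0"
      using c mm11_c3[OF a] by (intro mult_pos_neg) auto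
    then show ?thesis using key[of "mm a 1 1"] by linarith
  qed
  show "dominates a (d_est (c3 a)) (d_est c)" "inadmissible a (d_est c)"
    using dominatesI[OF a le] lt by auto
qed

lemma admissibleI:
  assumes a: "a > 0" and c1: "c3 a \<le> c" and c2: "c \<le> Digamma a"
  shows "admissible_M1 a c"
  unfolding admissible_M1_def
proof
  assume "\<exists>c'. dominates a (d_est c') (d_est c)"
  then obtain c' where d: "dominates a (d_est c') (d_est c)" by blast
  have all: "c'^2 - 2 * c' * mm a th1 th2 \<le> c^2 - 2 * c * mm a th1 th2" if "th1 > 0" "th2 > 0" for th1 th2
    using d that unfolding dominates_def by (auto simp: risk_le_iff[OF a])
  have key: "c'^2 - 2 * c' * m - (c^2 - 2 * c * m) = (c' - c) * (c' + c - 2 * m)" for m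
    by (simp add: power2_eq_square algebra_simps)
  have ne: "c' \<noteq> c" using d unfolding dominates_def by auto
  show False
  proof (cases "c' > c")
    case True
    have "(c' - c) * (c' + c - 2 * mm a 1 1) > 0"
      using True c1 mm11_c3[OF a] by (intro mult_pos_pos) auto
    then show False using all[of 1 1] key[of "mm a 1 1"] by simp
  next
    case False
    then have lt: "c' < c" using ne by simp
    have "eventually (\<lambda>n. mm a 1 (real n + 1) > (c + c') / 2) sequentially"
      using mm_tendsto[OF a] c2 lt by (intro order_tendstoD(1)) auto
    then obtain n where n: "mm a 1 (real n + 1) > (c + c') / 2" by (auto simp: eventually_sequentially)
    have "(c' - c) * (c' + c - 2 * mm a 1 (real n + 1)) > 0"
      using lt n by (intro mult_neg_neg) auto
    then show False using all[of 1 "real n + 1"] key[of "mm a 1 (real n + 1)"] by simp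
  qed
qed

theorem corollary3p1:
  fixes \<alpha> :: real
  assumes "\<alpha> > 0"
  shows "admissible_M1 \<alpha> (Digamma \<alpha>)
    \<and> inadmissible \<alpha> (d_est (ln \<alpha>)) \<and> dominates \<alpha> (d_est (Digamma \<alpha>)) (d_est (ln \<alpha>))
    \<and> inadmissible \<alpha> (d_est (ln (\<alpha> + 1))) \<and> dominates \<alpha> (d_est (Digamma \<alpha>)) (d_est (ln (\<alpha> + 1)))
    \<and> (\<forall>\<beta>. beta1 \<alpha> \<le> \<beta> \<and> \<beta> \<le> 0 \<longrightarrow> admissible_M1 \<alpha> (Digamma (\<alpha> + \<beta>)))
    \<and> (\<forall>\<beta>. -\<alpha> < \<beta> \<and> \<beta> < beta1 \<alpha> \<longrightarrow>
          inadmissible \<alpha> (d_est (Digamma (\<alpha> + \<beta>)))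
          \<and> dominates \<alpha> (d_est (c3 \<alpha>)) (d_est (Digamma (\<alpha> + \<beta>))))
    \<and> (\<forall>\<beta>. \<beta> > 0 \<longrightarrow>
          inadmissible \<alpha> (d_est (Digamma (\<alpha> + \<beta>)))
          \<and> dominates \<alpha> (d_est (Digamma \<alpha>)) (d_est (Digamma (\<alpha> + \<beta>))))"
proof -
  note a = assms
  have c3le: "c3 \<alpha> \<le> Digamma \<alpha>"
    using mm_le_Digamma[OF a, of 1 1] mm11_c3[OF a] by simp
  obtain x0 where x0: "0 < x0" "x0 \<le> \<alpha>" "Digamma x0 = c3 \<alpha>"
    using Digamma_hits[OF a c3le] by blast
  have b1: "beta1 \<alpha> = x0 - \<alpha>"
    unfolding beta1_def using Digamma_inv_eq[OF x0(1)] x0(3) by simp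
  have lnlt: "Digamma \<alpha> < ln \<alpha>" by (rule Digamma_lt_ln[OF a])
  have lnlt2: "Digamma \<alpha> < ln (\<alpha> + 1)" using lnlt a by (smt (verit) ln_less_cancel_iff)
  have P1: "admissible_M1 \<alpha> (Digamma \<alpha>)" by (rule admissibleI[OF a c3le]) simp
  have P2: "\<forall>\<beta>. beta1 \<alpha> \<le> \<beta> \<and> \<beta> \<le> 0 \<longrightarrow> admissible_M1 \<alpha> (Digamma (\<alpha> + \<beta>))"
  proof (intro allI impI)
    fix \<beta> assume b: "beta1 \<alpha> \<le> \<beta> \<and> \<beta> \<le> 0"
    then have "x0 \<le> \<alpha> + \<beta>" "\<alpha> + \<beta> \<le> \<alpha>" using b1 by auto
    then show "admissible_M1 \<alpha> (Digamma (\<alpha> + \<beta>))"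
      using x0 by (intro admissibleI[OF a]) (auto intro!: Digamma_real_mono simp flip: x0(3))
  qed
  have P3: "\<forall>\<beta>. -\<alpha> < \<beta> \<and> \<beta> < beta1 \<alpha> \<longrightarrow>
          inadmissible \<alpha> (d_est (Digamma (\<alpha> + \<beta>)))
          \<and> dominates \<alpha> (d_est (c3 \<alpha>)) (d_est (Digamma (\<alpha> + \<beta>)))"
  proof (intro allI impI)
    fix \<beta> assume b: "-\<alpha> < \<beta> \<and> \<beta> < beta1 \<alpha>"
    then have "0 < \<alpha> + \<beta>" "\<alpha> + \<beta> < x0" using b1 by auto
    then have "Digamma (\<alpha> + \<beta>) < c3 \<alpha>" using x0(3) Digamma_real_strict_mono by metis
    then show "inadmissible \<alpha> (d_est (Digamma (\<alpha> + \<beta>))) \<and> dominates \<alpha> (d_est (c3 \<alpha>)) (d_est (Digamma (\<alpha> + \<beta>)))"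
      using dom_left[OF a] by auto
  qed
  have P4: "\<forall>\<beta>. \<beta> > 0 \<longrightarrow>
          inadmissible \<alpha> (d_est (Digamma (\<alpha> + \<beta>)))
          \<and> dominates \<alpha> (d_est (Digamma \<alpha>)) (d_est (Digamma (\<alpha> + \<beta>)))"
  proof (intro allI impI)
    fix \<beta> :: real assume b: "\<beta> > 0"
    then have "Digamma \<alpha> < Digamma (\<alpha> + \<beta>)" using a by (intro Digamma_real_strict_mono) auto
    then show "inadmissible \<alpha> (d_est (Digamma (\<alpha> + \<beta>))) \<and> dominates \<alpha> (d_est (Digamma \<alpha>)) (d_est (Digamma (\<alpha> + \<beta>)))"
      using dom_right[OF a] by auto
  qed
  show ?thesis using P1 P2 P3 P4 dom_right[OF a lnlt] dom_right[OF a lnlt2] by auto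
qed

end
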